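(* Let $p\ge 10$ and let $s$ be an integer with $1\le s<p/3-1$. Suppose Assumption 1 holds and Assumption 2 holds with some $0\le\delta_s<1$. For $k=1,\dots,s$ let $\lambda_k=\lambda_k(\bar D)$. Then there exists a constant $C_L>0$ depending only on $a_u$ and $a_\ell$ such that $$\inf_{\hat f}\ \sup_{f^*\in\mathcal{F}_{T,s,D}}\mathbb{E}\big[\|\hat f-f^*\|_2^2\big]\ \ge\ C_L\max_{1\le k\le s}\left\{\min\left(\frac{k}{p^2\lambda_k^2},\ \frac{k}{(1+\delta_s)T}\log\frac{p-k-1}{k/2}\right)\right\},$$ where the infimum is over all measurable estimators $\hat f$ of $f^*$ based on $y$ (which may depend on $T$, $A$, $D$).
   Context: Setup: $n,p\ge1$ integers, $T>0$. $D\in\mathbb{R}^{p\times p}$ is an orthonormal matrix with columns $d_1,\dots,d_p$, where $d_1=p^{-1/2}(1,\dots,1)^\top$; $\bar D=[d_2,\dots,d_p]\in\mathbb{R}^{p\times(p-1)}$. For an integer $s\ge1$, $\mathcal{F}_{T,s,D}=\{f\in\mathbb{R}^p_{\ge0}:\ \|f\|_1=1,\ \|\bar D^\top f\|_0\le s\}$, where $\|v\|_0$ is the number of nonzero entries. Given a sensing matrix $A\in\mathbb{R}^{n\times p}$ and $f^*\in\mathcal{F}_{T,s,D}$, the observation is $y=(y_1,\dots,y_n)$ with independent $y_i\sim\mathrm{Poisson}(T(Af^* )_i)$; expectation is over $y$. Assumption 1: there are constants $a_\ell<a_u$ and a matrix $\widetilde A\in\mathbb{R}^{n\times p}$ with all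 entries in $[a_\ell/\sqrt n,a_u/\sqrt n]$ such that $A=\big(\widetilde A+\frac{a_u-2a_\ell}{\sqrt n}\mathbb{1}_{n\times p}\big)/\big(2(a_u-a_\ell)\sqrt n\big)$, with $\mathbb{1}_{n\times p}$ the all-ones matrix. Assumption 2: there is $\delta_s\ge0$ such that $\|\widetilde A D u\|_2^2\le(1+\delta_s)\|u\|_2^2$ for all $u\in\mathbb{R}^p$ with $\|u\|_0\le 2s$. $s$-sparse localization: for a matrix $X$ with $m$ columns and $1\le k\le m$, $\lambda_k(X)=\max\{\|Xv\|_\infty:\ v\in\{-1,0,1\}^{m},\ \|v\|_0=k\}$. Here $\log$ is the natural logarithm. *)

theory Defs
  imports "HOL-Analysis.Analysis" "HOL-Probability.Probability"
begin

text \<open>Matrices are represented as functions nat => nat => real with explicit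
 index bounds (0-based); vectors as nat => real (extensional: zero outside range).\<close>

definition orthonormal_mat :: "nat \<Rightarrow> (nat \<Rightarrow> nat \<Rightarrow> real) \<Rightarrow> bool" where
  "orthonormal_mat p D \<longleftrightarrow>
     (\<forall>i<p. \<forall>j<p. (\<Sum>k<p. D k i * D k j) = (if i = j then 1 else 0))"

definition first_col_const :: "nat \<Rightarrow> (nat \<Rightarrow> nat \<Rightarrow> real) \<Rightarrow> bool" where
  "first_col_const p D \<longleftrightarrow> (\<forall>i<p. D i 0 = 1 / sqrt (real p))"

definition Dbar :: "(nat \<Rightarrow> nat \<Rightarrow> real) \<Rightarrow> nat \<Rightarrow> nat \<Rightarrow> real" where
  "Dbar D i j = D i (j + 1)"

definition FTsD :: "nat \<Rightarrow> nat \<Rightarrow> (nat \<Rightarrow> nat \<Rightarrow> real) \<Rightarrow> (nat \<Rightarrow> real) set" where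
  "FTsD p s D = {f. (\<forall>i. p \<le> i \<longrightarrow> f i = 0) \<and> (\<forall>i<p. 0 \<le> f i) \<and> (\<Sum>i<p. \<bar>f i\<bar>) = 1
       \<and> card {j. j < p - 1 \<and> (\<Sum>i<p. Dbar D i j * f i) \<noteq> 0} \<le> s}"

definition sensA :: "real \<Rightarrow> real \<Rightarrow> nat \<Rightarrow> (nat \<Rightarrow> nat \<Rightarrow> real) \<Rightarrow> nat \<Rightarrow> nat \<Rightarrow> real" where
  "sensA al au n At i j = (At i j + (au - 2 * al) / sqrt (real n)) / (2 * (au - al) * sqrt (real n))"

definition matvec :: "nat \<Rightarrow> (nat \<Rightarrow> nat \<Rightarrow> real) \<Rightarrow> (nat \<Rightarrow> real) \<Rightarrow> nat \<Rightarrow> real" where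
  "matvec m M v i = (\<Sum>j<m. M i j * v j)"

text \<open>Law of y: independent y_i ~ Poisson(T (A f)_i), i < n; y i = 0 for i >= n.\<close>
definition obs_law :: "nat \<Rightarrow> nat \<Rightarrow> real \<Rightarrow> (nat \<Rightarrow> nat \<Rightarrow> real) \<Rightarrow> (nat \<Rightarrow> real) \<Rightarrow> (nat \<Rightarrow> nat) pmf" where
  "obs_law n p T A f = Pi_pmf {..<n} 0 (\<lambda>i. poisson_pmf (T * matvec p A f i))"

definition risk :: "nat \<Rightarrow> nat \<Rightarrow> real \<Rightarrow> (nat \<Rightarrow> nat \<Rightarrow> real) \<Rightarrow> ((nat \<Rightarrow> nat) \<Rightarrow> nat \<Rightarrow> real)
     \<Rightarrow> (nat \<Rightarrow> real) \<Rightarrow> ennreal" where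
  "risk n p T A fhat f = (\<integral>\<^sup>+ y. ennreal (\<Sum>i<p. (fhat y i - f i)\<^sup>2) \<partial>measure_pmf (obs_law n p T A f))"

definition sign_vecs :: "nat \<Rightarrow> nat \<Rightarrow> (nat \<Rightarrow> real) set" where
  "sign_vecs m k = {v. (\<forall>j. m \<le> j \<longrightarrow> v j = 0) \<and> (\<forall>j<m. v j \<in> {-1, 0, 1})
                        \<and> card {j. j < m \<and> v j \<noteq> 0} = k}"

definition lambda_loc :: "nat \<Rightarrow> nat \<Rightarrow> (nat \<Rightarrow> nat \<Rightarrow> real) \<Rightarrow> nat \<Rightarrow> real" where
  "lambda_loc r m X k = Max ((\<lambda>v. Max ((\<lambda>i. \<bar>matvec m X v i\<bar>) ` {..<r})) ` sign_vecs m k)"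

end

theory Submission
  imports Defs
begin


lemma poisson_rho:
  fixes a b :: real assumes a: "0 < a" and b: "0 < b"
  shows "(\<integral>\<^sup>+ m. ennreal (pmf (poisson_pmf a) m / pmf (poisson_pmf b) m) \<partial>measure_pmf (poisson_pmf a))
         = ennreal (exp ((a - b)\<^sup>2 / b))"
proof -
  let ?c = "a\<^sup>2 / b"
  have eq: "pmf (poisson_pmf a) m * (pmf (poisson_pmf a) m / pmf (poisson_pmf b) m)
        = exp (b - 2*a) * (?c ^ m / fact m)" for m
    using a b by (simp add: power2_eq_square power_mult_distrib power_divide exp_diff exp_add
         field_simps exp_minus mult_exp_exp)
  have summ: "summable (\<lambda>m::nat. exp (b - 2*a) * (?c ^ m / fact m))"
    using summable_exp[of ?c] by (intro summable_mult) (simp add: field_simps divide_inverse[symmetric])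
  have "(\<integral>\<^sup>+ m. ennreal (pmf (poisson_pmf a) m / pmf (poisson_pmf b) m) \<partial>measure_pmf (poisson_pmf a))
      = (\<integral>\<^sup>+ m. ennreal (exp (b - 2*a) * (?c ^ m / fact m)) \<partial>count_space UNIV)"
    unfolding nn_integral_measure_pmf
  proof (intro nn_integral_cong)
    fix x :: nat
    have "ennreal (pmf (poisson_pmf a) x) * ennreal (pmf (poisson_pmf a) x / pmf (poisson_pmf b) x)
        = ennreal (pmf (poisson_pmf a) x * (pmf (poisson_pmf a) x / pmf (poisson_pmf b) x))"
      by (rule ennreal_mult''[symmetric]) simp
    then show "ennreal (pmf (poisson_pmf a) x) * ennreal (pmf (poisson_pmf a) x / pmf (poisson_pmf b) x)
        = ennreal (exp (b - 2*a) * (?c ^ x / fact x))" by (simp only: eq)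
  qed
  also have "\<dots> = ennreal (\<Sum>m. exp (b - 2*a) * (?c ^ m / fact m))"
    using summ a b by (simp add: nn_integral_count_space_nat suminf_ennreal2)
  also have "(\<Sum>m. exp (b - 2*a) * (?c ^ m / fact m)) = exp (b - 2*a) * exp ?c"
  proof -
    have s1: "summable (\<lambda>m::nat. ?c ^ m / fact m)"
      using summable_exp[of ?c] by (simp add: field_simps divide_inverse[symmetric])
    have "(\<Sum>m. ?c ^ m / fact m) = exp ?c"
      by (simp add: exp_def field_simps divide_inverse[symmetric])
    then show ?thesis using suminf_mult[OF s1, of "exp (b - 2*a)"] by simp
  qed
  also have "\<dots> = exp ((a - b)\<^sup>2 / b)"
    using b by (simp add: exp_add[symmetric] power2_eq_square field_simps)
  finally show ?thesis .
qed

lemma Pi_poisson_rho: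
  fixes a b :: "nat \<Rightarrow> real"
  assumes I: "finite I" and a: "\<And>i. i \<in> I \<Longrightarrow> 0 < a i" and b: "\<And>i. i \<in> I \<Longrightarrow> 0 < b i"
  shows "(\<integral>\<^sup>+ y. ennreal (pmf (Pi_pmf I 0 (\<lambda>i. poisson_pmf (a i))) y / pmf (Pi_pmf I 0 (\<lambda>i. poisson_pmf (b i))) y)
            \<partial>measure_pmf (Pi_pmf I 0 (\<lambda>i. poisson_pmf (a i))))
         = ennreal (exp (\<Sum>i\<in>I. (a i - b i)\<^sup>2 / b i))"
proof -
  let ?P = "Pi_pmf I 0 (\<lambda>i. poisson_pmf (a i))"
  let ?Q = "Pi_pmf I 0 (\<lambda>i. poisson_pmf (b i))"
  let ?r = "\<lambda>i m. ennreal (pmf (poisson_pmf (a i)) m / pmf (poisson_pmf (b i)) m)"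
  have "(\<integral>\<^sup>+ y. ennreal (pmf ?P y / pmf ?Q y) \<partial>measure_pmf ?P) = (\<integral>\<^sup>+ y. (\<Prod>i\<in>I. ?r i (y i)) \<partial>measure_pmf ?P)"
  proof (intro nn_integral_cong_AE, subst AE_measure_pmf_iff, intro ballI)
    fix y assume y: "y \<in> set_pmf ?P"
    have "y \<in> {f. \<forall>x. x \<notin> I \<longrightarrow> f x = 0}" by (rule subsetD[OF set_Pi_pmf_subset[OF I] y])
    then have ext: "\<And>x. x \<notin> I \<Longrightarrow> y x = 0" by simp
    have "pmf ?P y / pmf ?Q y = (\<Prod>i\<in>I. pmf (poisson_pmf (a i)) (y i)) / (\<Prod>i\<in>I. pmf (poisson_pmf (b i)) (y i))"
      using ext I by (simp add: pmf_Pi')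
    also have "\<dots> = (\<Prod>i\<in>I. pmf (poisson_pmf (a i)) (y i) / pmf (poisson_pmf (b i)) (y i))"
      by (rule prod_dividef[symmetric])
    finally show "ennreal (pmf ?P y / pmf ?Q y) = (\<Prod>i\<in>I. ?r i (y i))"
      by (simp add: prod_ennreal)
  qed
  also have "\<dots> = (\<Prod>i\<in>I. \<integral>\<^sup>+ m. ?r i m \<partial>measure_pmf (poisson_pmf (a i)))"
    by (rule nn_integral_prod_Pi_pmf[OF I])
  also have "\<dots> = (\<Prod>i\<in>I. ennreal (exp ((a i - b i)\<^sup>2 / b i)))"
    using a b by (intro prod.cong refl poisson_rho) auto
  also have "\<dots> = ennreal (\<Prod>i\<in>I. exp ((a i - b i)\<^sup>2 / b i))"
    by (simp add: prod_ennreal)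
  also have "(\<Prod>i\<in>I. exp ((a i - b i)\<^sup>2 / b i)) = exp (\<Sum>i\<in>I. (a i - b i)\<^sup>2 / b i)"
    by (simp add: exp_sum I)
  finally show ?thesis .
qed

lemma Pi_poisson_ac:
  fixes a b :: "nat \<Rightarrow> real"
  assumes I: "finite I" and b: "\<And>i. i \<in> I \<Longrightarrow> 0 < b i"
  assumes "pmf (Pi_pmf I 0 (\<lambda>i. poisson_pmf (b i))) y = 0"
  shows "pmf (Pi_pmf I 0 (\<lambda>i. poisson_pmf (a i))) y = 0"
proof (cases "\<forall>x. x \<notin> I \<longrightarrow> y x = 0")
  case True
  have "(\<Prod>i\<in>I. pmf (poisson_pmf (b i)) (y i)) > 0"
  proof (intro prod_pos)
    fix i assume "i \<in> I"
    then have "0 < b i" by (rule b)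
    then show "0 < pmf (poisson_pmf (b i)) (y i)" by simp
  qed
  moreover have "pmf (Pi_pmf I 0 (\<lambda>i. poisson_pmf (b i))) y = (\<Prod>i\<in>I. pmf (poisson_pmf (b i)) (y i))"
    using True I by (intro pmf_Pi') auto
  ultimately show ?thesis using assms(3) by simp
next
  case False
  then have "\<exists>x. x \<notin> I \<and> y x \<noteq> 0" by blast
  then show ?thesis using I by (intro pmf_Pi_outside) auto
qed

lemma key_ineq:
  fixes P Q :: "'a pmf" and u R :: real
  assumes ac: "\<And>y. pmf Q y = 0 \<Longrightarrow> pmf P y = 0"
    and rho: "(\<integral>\<^sup>+ y. ennreal (pmf P y / pmf Q y) \<partial>measure_pmf P) = ennreal R"
    and u: "0 < u" and R: "0 \<le> R"
  shows "measure_pmf.prob P X \<le> u * measure_pmf.prob Q X + R / (4 * u)"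
proof -
  have pt: "ennreal (pmf P y) * indicator X y \<le> ennreal (u * pmf Q y) * indicator X y
          + ennreal (1 / (4*u)) * (ennreal (pmf P y) * ennreal (pmf P y / pmf Q y))" for y
  proof (cases "pmf Q y = 0")
    case True then show ?thesis using ac by simp
  next
    case False
    then have q: "pmf Q y > 0" using pmf_nonneg[of Q y] by linarith
    have "pmf P y \<le> u * pmf Q y + 1 / (4*u) * (pmf P y * (pmf P y / pmf Q y))"
    proof -
      have "u * pmf Q y + 1 / (4*u) * (pmf P y * (pmf P y / pmf Q y)) - pmf P y
          = (pmf P y - 2 * u * pmf Q y)\<^sup>2 / (4 * u * pmf Q y)"
        using q u by (simp add: field_simps power2_eq_square)
      moreover have "(pmf P y - 2 * u * pmf Q y)\<^sup>2 / (4 * u * pmf Q y) \<ge> 0"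
        using q u by simp
      ultimately show ?thesis by linarith
    qed
    then have "ennreal (pmf P y) \<le> ennreal (u * pmf Q y) + ennreal (1 / (4*u)) * (ennreal (pmf P y) * ennreal (pmf P y / pmf Q y))"
      using q u by (simp add: ennreal_plus[symmetric] ennreal_mult''[symmetric] ennreal_le_iff del: ennreal_plus)
    then show ?thesis by (cases "y \<in> X") auto
  qed
  have em: "ennreal (measure_pmf.prob M Z) = (\<integral>\<^sup>+ y. ennreal (pmf M y) * indicator Z y \<partial>count_space UNIV)" for M :: "'a pmf" and Z
  proof -
    have "ennreal (measure_pmf.prob M Z) = emeasure (measure_pmf M) Z"
      by (simp add: measure_pmf.emeasure_eq_measure)
    also have "\<dots> = (\<integral>\<^sup>+ y. indicator Z y \<partial>measure_pmf M)" by simp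
    also have "\<dots> = (\<integral>\<^sup>+ y. ennreal (pmf M y) * indicator Z y \<partial>count_space UNIV)"
      by (rule nn_integral_measure_pmf)
    finally show ?thesis .
  qed
  have "ennreal (measure_pmf.prob P X) = (\<integral>\<^sup>+ y. ennreal (pmf P y) * indicator X y \<partial>count_space UNIV)"
    by (rule em)
  also have "\<dots> \<le> (\<integral>\<^sup>+ y. ennreal (u * pmf Q y) * indicator X y + ennreal (1 / (4*u)) * (ennreal (pmf P y) * ennreal (pmf P y / pmf Q y)) \<partial>count_space UNIV)"
    by (intro nn_integral_mono pt)
  also have "\<dots> = (\<integral>\<^sup>+ y. ennreal (u * pmf Q y) * indicator X y \<partial>count_space UNIV)
        + ennreal (1 / (4*u)) * (\<integral>\<^sup>+ y. ennreal (pmf P y) * ennreal (pmf P y / pmf Q y) \<partial>count_space UNIV)"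
    by (simp add: nn_integral_add nn_integral_cmult)
  also have "(\<integral>\<^sup>+ y. ennreal (u * pmf Q y) * indicator X y \<partial>count_space UNIV)
      = ennreal u * (\<integral>\<^sup>+ y. ennreal (pmf Q y) * indicator X y \<partial>count_space UNIV)"
    using u by (simp add: ennreal_mult nn_integral_cmult mult.assoc)
  also have "(\<integral>\<^sup>+ y. ennreal (pmf Q y) * indicator X y \<partial>count_space UNIV) = ennreal (measure_pmf.prob Q X)"
    by (rule em[symmetric])
  also have "(\<integral>\<^sup>+ y. ennreal (pmf P y) * ennreal (pmf P y / pmf Q y) \<partial>count_space UNIV) = ennreal R"
    using rho by (simp add: nn_integral_measure_pmf)
  also have "ennreal u * ennreal (measure_pmf.prob Q X) + ennreal (1 / (4 * u)) * ennreal R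
      = ennreal (u * measure_pmf.prob Q X + R / (4 * u))"
  proof -
    show ?thesis using u R by (simp add: ennreal_mult''[symmetric] ennreal_plus[symmetric] del: ennreal_plus)
  qed
  finally show ?thesis
    using u R by (subst (asm) ennreal_le_iff) (auto intro!: add_nonneg_nonneg)
qed



lemma fano_sum:
  fixes P :: "'j \<Rightarrow> 'a pmf" and Q :: "'a pmf" and A :: "'j \<Rightarrow> 'a set"
  assumes J: "finite J" and disj: "disjoint_family_on A J" and u: "0 < u"
    and b: "\<And>j. j \<in> J \<Longrightarrow> measure_pmf.prob (P j) (A j) \<le> u * measure_pmf.prob Q (A j) + R / (4 * u)"
  shows "(\<Sum>j\<in>J. measure_pmf.prob (P j) (A j)) \<le> u + real (card J) * (R / (4 * u))"
proof -
  have "(\<Sum>j\<in>J. measure_pmf.prob (P j) (A j)) \<le> (\<Sum>j\<in>J. u * measure_pmf.prob Q (A j) + R / (4 * u))"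
    by (intro sum_mono b)
  also have "\<dots> = u * (\<Sum>j\<in>J. measure_pmf.prob Q (A j)) + real (card J) * (R / (4 * u))"
    by (simp add: sum.distrib sum_distrib_left)
  also have "(\<Sum>j\<in>J. measure_pmf.prob Q (A j)) = measure_pmf.prob Q (\<Union>j\<in>J. A j)"
    by (rule measure_pmf.finite_measure_finite_Union[symmetric]) (use J disj in auto)
  also have "\<dots> \<le> 1" by simp
  finally show ?thesis using u by (simp add: mult_left_le)
qed



locale LB =
  fixes al au :: real and n p s k :: nat and T \<delta> :: real and D At :: "nat \<Rightarrow> nat \<Rightarrow> real"
  assumes alau: "al < au" and n1: "1 \<le> n" and p10: "10 \<le> p" and k1: "1 \<le> k" and ks: "k \<le> s"
    and sp: "real s < real p / 3 - 1" and Tpos: "0 < T"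
    and orth: "orthonormal_mat p D" and fc: "first_col_const p D"
    and Atb: "\<forall>i<n. \<forall>j<p. al / sqrt (real n) \<le> At i j \<and> At i j \<le> au / sqrt (real n)"
    and dl0: "0 \<le> \<delta>"
    and iso: "\<forall>u::nat \<Rightarrow> real. (\<forall>j. p \<le> j \<longrightarrow> u j = 0) \<longrightarrow> card {j. j < p \<and> u j \<noteq> 0} \<le> 2 * s \<longrightarrow>
        (\<Sum>i<n. (matvec p At (matvec p D u) i)\<^sup>2) \<le> (1 + \<delta>) * (\<Sum>j<p. (u j)\<^sup>2)"
begin

definition "m = (p - 1) div k"
definition "lam = lambda_loc p (p - 1) (Dbar D) k"
definition "G = au - al"
definition "gam = sqrt (min (1 / ((real p)\<^sup>2 * lam\<^sup>2)) (G\<^sup>2 * ln (real m / 2) / (T * (1 + \<delta>))))"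
definition "col b j = b * m + j + 1"
definition "fS S i = (if i < p then 1 / real p + gam * (\<Sum>b<k. D i (col b (S b))) else 0)"
definition "Am = sensA al au n At"

lemma p3k: "3 * k + 4 \<le> p"
proof -
  have "real k < real p / 3 - 1" using ks sp by linarith
  then show ?thesis by linarith
qed

lemma m3: "3 \<le> m"
proof -
  have "3 * k \<le> p - 1" using p3k by linarith
  then have "(3 * k) div k \<le> (p - 1) div k" by (rule div_le_mono)
  then show ?thesis using k1 by (simp add: m_def)
qed

lemma mk: "m * k \<le> p - 1"
  unfolding m_def by (rule div_times_less_eq_dividend)

lemma d_lt: "p - 1 < (m + 1) * k"
proof -
  have "p - 1 = m * k + (p - 1) mod k" unfolding m_def by simp
  moreover have "(p - 1) mod k < k" using k1 by simp
  ultimately show ?thesis by simp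
qed

lemma bm_lt: assumes "b < k" "j < m" shows "b * m + j < m * k"
proof -
  have "b * m + j < b * m + m" using assms by simp
  also have "\<dots> = (b + 1) * m" by simp
  also have "\<dots> \<le> k * m" using assms by (intro mult_right_mono) auto
  finally show ?thesis by (simp add: mult.commute)
qed

lemma col_lt: assumes "b < k" "j < m" shows "col b j < p"
  using bm_lt[OF assms] mk p10 unfolding col_def by linarith

lemma col_ge1: "1 \<le> col b j" unfolding col_def by simp

lemma bm_inj: assumes "j < m" "j' < m" "b * m + j = b' * m + j'" shows "b = b' \<and> j = j'"
proof -
  have 1: "(b * m + j) div m = b" "(b * m + j) mod m = j" using assms(1) by auto
  have 2: "(b' * m + j') div m = b'" "(b' * m + j') mod m = j'" using assms(2) by auto
  have "b = b'" using 1(1) 2(1) assms(3) by simp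
  moreover have "j = j'" using 1(2) 2(2) assms(3) by simp
  ultimately show ?thesis by simp
qed

lemma col_inj: assumes "j < m" "j' < m" "col b j = col b' j'" shows "b = b' \<and> j = j'"
proof -
  have "b * m + j = b' * m + j'" using assms(3) unfolding col_def by simp
  then show ?thesis using bm_inj[OF assms(1,2)] by blast
qed

lemma orthD: "c < p \<Longrightarrow> c' < p \<Longrightarrow> (\<Sum>i<p. D i c * D i c') = (if c = c' then 1 else 0)"
  using orth unfolding orthonormal_mat_def by blast

lemma colsum: assumes "1 \<le> c" "c < p" shows "(\<Sum>i<p. D i c) = 0"
proof -
  have "(\<Sum>i<p. D i 0 * D i c) = 0" using orthD[of 0 c] assms by simp
  moreover have "(\<Sum>i<p. D i 0 * D i c) = (1 / sqrt (real p)) * (\<Sum>i<p. D i c)"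
    using fc unfolding first_col_const_def by (simp add: sum_distrib_left)
  moreover have "sqrt (real p) > 0" using p10 by simp
  ultimately show ?thesis by simp
qed

end


context LB begin

definition "PS = PiE {..<k} (\<lambda>_. {..<m})"

lemma finite_sign_vecs: "finite (sign_vecs d r)"
proof -
  have "sign_vecs d r \<subseteq> {f. \<forall>x. (x \<in> {..<d} \<longrightarrow> f x \<in> {-1, 0, 1}) \<and> (x \<notin> {..<d} \<longrightarrow> f x = 0)}"
    unfolding sign_vecs_def by auto
  moreover have "finite {f::nat \<Rightarrow> real. \<forall>x. (x \<in> {..<d} \<longrightarrow> f x \<in> {-1, 0, 1}) \<and> (x \<notin> {..<d} \<longrightarrow> f x = 0)}"
    by (intro finite_set_of_finite_funs) auto
  ultimately show ?thesis by (rule finite_subset)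
qed

lemma PS_lt: "S \<in> PS \<Longrightarrow> b < k \<Longrightarrow> S b < m"
  unfolding PS_def by auto

lemma img_inj: assumes "S \<in> PS" shows "inj_on (\<lambda>b. b * m + S b) {..<k}"
proof (rule inj_onI)
  fix b b' assume "b \<in> {..<k}" "b' \<in> {..<k}" "b * m + S b = b' * m + S b'"
  then show "b = b'" using bm_inj[of "S b" "S b'" b b'] PS_lt[OF assms] by auto
qed

lemma lam_bound: assumes S: "S \<in> PS" and i: "i < p"
  shows "\<bar>\<Sum>b<k. D i (col b (S b))\<bar> \<le> lam"
proof -
  define img where "img = (\<lambda>b. b * m + S b) ` {..<k}"
  define w where "w = (\<lambda>c. if c \<in> img then 1 else 0 :: real)"
  have img_lt: "c \<in> img \<Longrightarrow> c < p - 1" for c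
    using bm_lt PS_lt[OF S] mk unfolding img_def by fastforce
  have cardimg: "card img = k" unfolding img_def using card_image[OF img_inj[OF S]] by simp
  have set_eq: "{c. c < p - 1 \<and> w c \<noteq> 0} = img" using img_lt unfolding w_def by auto
  have w_in: "w \<in> sign_vecs (p - 1) k"
    unfolding sign_vecs_def mem_Collect_eq
  proof (intro conjI allI impI)
    fix j assume "p - 1 \<le> j"
    then have "j \<notin> img" using img_lt by fastforce
    then show "w j = 0" by (simp add: w_def)
  next
    fix j show "w j \<in> {- 1, 0, 1}" by (simp add: w_def)
  next
    show "card {j. j < p - 1 \<and> w j \<noteq> 0} = k" using set_eq cardimg by simp
  qed
  have "matvec (p - 1) (Dbar D) w i = (\<Sum>c<p - 1. D i (c + 1) * w c)"
    unfolding matvec_def Dbar_def by simp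
  also have "\<dots> = (\<Sum>c\<in>{..<p - 1} \<inter> img. D i (c + 1))"
    unfolding w_def by (simp add: sum.inter_restrict if_distrib cong: if_cong)
  also have "{..<p - 1} \<inter> img = img" using img_lt by auto
  also have "(\<Sum>c\<in>img. D i (c + 1)) = (\<Sum>b<k. D i (col b (S b)))"
    unfolding img_def col_def by (subst sum.reindex[OF img_inj[OF S]]) simp
  finally have eq: "matvec (p - 1) (Dbar D) w i = (\<Sum>b<k. D i (col b (S b)))" .
  have "\<bar>matvec (p - 1) (Dbar D) w i\<bar> \<le> Max ((\<lambda>i. \<bar>matvec (p - 1) (Dbar D) w i\<bar>) ` {..<p})"
    using i by (intro Max_ge) auto
  also have "\<dots> \<le> lam" unfolding lam_def lambda_loc_def
    using w_in by (intro Max_ge finite_imageI finite_sign_vecs) auto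
  finally show ?thesis using eq by simp
qed

lemma lam_nonneg: "0 \<le> lam"
proof -
  define S :: "nat \<Rightarrow> nat" where "S = (\<lambda>b. if b < k then 0 else undefined)"
  have "S \<in> PS" unfolding PS_def S_def using m3 by (auto simp: PiE_iff extensional_def split: if_splits)
  from lam_bound[OF this, of 0] p10 show ?thesis by linarith
qed

lemma ln_pos: "0 < ln (real m / 2)" using m3 by simp

lemma G_pos: "0 < G" unfolding G_def using alau by simp

lemma min_nonneg: "0 \<le> min (1 / ((real p)\<^sup>2 * lam\<^sup>2)) (G\<^sup>2 * ln (real m / 2) / (T * (1 + \<delta>)))"
proof -
  have t: "0 < T * (1 + \<delta>)" using Tpos dl0 by simp
  have "0 \<le> G\<^sup>2 * ln (real m / 2)" using ln_pos by simp
  then have "0 \<le> G\<^sup>2 * ln (real m / 2) / (T * (1 + \<delta>))" using t by (rule divide_nonneg_pos)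
  moreover have "0 \<le> 1 / ((real p)\<^sup>2 * lam\<^sup>2)" by simp
  ultimately show ?thesis by simp
qed

lemma gam2: "gam\<^sup>2 = min (1 / ((real p)\<^sup>2 * lam\<^sup>2)) (G\<^sup>2 * ln (real m / 2) / (T * (1 + \<delta>)))"
  unfolding gam_def using min_nonneg by (rule real_sqrt_pow2)

lemma gam_nonneg: "0 \<le> gam" unfolding gam_def using min_nonneg by (rule real_sqrt_ge_zero)

lemma gam_lam: "gam * lam \<le> 1 / real p"
proof (cases "lam = 0")
  case True then show ?thesis by simp
next
  case False
  then have l: "lam > 0" using lam_nonneg by simp
  have "(gam * lam)\<^sup>2 \<le> (1 / real p)\<^sup>2"
  proof -
    have "(gam * lam)\<^sup>2 = gam\<^sup>2 * lam\<^sup>2" by (simp add: power_mult_distrib)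
    also have "\<dots> \<le> 1 / ((real p)\<^sup>2 * lam\<^sup>2) * lam\<^sup>2"
      using gam2 by (intro mult_right_mono) auto
    also have "\<dots> = (1 / real p)\<^sup>2" using l by (simp add: field_simps power2_eq_square)
    finally show ?thesis .
  qed
  moreover have "0 \<le> 1 / real p" by simp
  ultimately show ?thesis by (rule power2_le_imp_le)
qed

lemma inner_fS: assumes S: "S \<in> PS" and c: "1 \<le> c" "c < p"
  shows "(\<Sum>i<p. D i c * fS S i) = gam * (\<Sum>b<k. if c = col b (S b) then 1 else 0)"
proof -
  have "(\<Sum>i<p. D i c * fS S i) = (1 / real p) * (\<Sum>i<p. D i c) + gam * (\<Sum>b<k. \<Sum>i<p. D i c * D i (col b (S b)))"
    unfolding fS_def by (simp add: algebra_simps sum.distrib sum_distrib_left sum_divide_distrib sum.swap[of _ "{..<k}"])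
  also have "(\<Sum>i<p. D i c) = 0" by (rule colsum[OF c])
  also have "(\<Sum>b<k. \<Sum>i<p. D i c * D i (col b (S b))) = (\<Sum>b<k. if c = col b (S b) then 1 else 0)"
    using col_lt PS_lt[OF S] c by (intro sum.cong refl orthD) auto
  finally show ?thesis by simp
qed

lemma fS_in: assumes S: "S \<in> PS" shows "fS S \<in> FTsD p s D"
proof -
  have nonneg: "0 \<le> fS S i" for i
  proof (cases "i < p")
    case True
    have "\<bar>gam * (\<Sum>b<k. D i (col b (S b)))\<bar> \<le> gam * lam"
      using lam_bound[OF S True] gam_nonneg by (simp add: abs_mult mult_left_mono)
    then have "gam * (\<Sum>b<k. D i (col b (S b))) \<ge> - (1 / real p)" using gam_lam by linarith
    then show ?thesis using True unfolding fS_def by simp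
  qed (simp add: fS_def)
  have sum1: "(\<Sum>i<p. \<bar>fS S i\<bar>) = 1"
  proof -
    have "(\<Sum>i<p. \<bar>fS S i\<bar>) = (\<Sum>i<p. fS S i)" using nonneg by simp
    also have "\<dots> = (\<Sum>i<p. 1 / real p) + gam * (\<Sum>b<k. \<Sum>i<p. D i (col b (S b)))"
      unfolding fS_def by (simp add: sum.distrib sum_distrib_left sum.swap[of _ "{..<k}"])
    also have "(\<Sum>b<k. \<Sum>i<p. D i (col b (S b))) = 0"
      using col_lt PS_lt[OF S] col_ge1 by (intro sum.neutral ballI colsum) auto
    finally show ?thesis using p10 by simp
  qed
  have sparse: "card {j. j < p - 1 \<and> (\<Sum>i<p. Dbar D i j * fS S i) \<noteq> 0} \<le> s"
  proof -
    have "{j. j < p - 1 \<and> (\<Sum>i<p. Dbar D i j * fS S i) \<noteq> 0} \<subseteq> (\<lambda>b. b * m + S b) ` {..<k}"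
    proof
      fix j assume "j \<in> {j. j < p - 1 \<and> (\<Sum>i<p. Dbar D i j * fS S i) \<noteq> 0}"
      then have j: "j < p - 1" and nz: "(\<Sum>i<p. D i (j + 1) * fS S i) \<noteq> 0" by (auto simp: Dbar_def)
      have eq: "(\<Sum>i<p. D i (j + 1) * fS S i) = gam * (\<Sum>b<k. if j + 1 = col b (S b) then 1 else 0)"
        using j by (intro inner_fS S) auto
      have "\<exists>b<k. j + 1 = col b (S b)"
      proof (rule ccontr)
        assume "\<not> (\<exists>b<k. j + 1 = col b (S b))"
        then have "(\<Sum>b<k. if j + 1 = col b (S b) then 1 else 0::real) = 0" by (intro sum.neutral) auto
        with nz eq show False by simp
      qed
      then obtain b where "b < k" "j + 1 = col b (S b)" by blast
      then show "j \<in> (\<lambda>b. b * m + S b) ` {..<k}" unfolding col_def by auto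
    qed
    then have "card {j. j < p - 1 \<and> (\<Sum>i<p. Dbar D i j * fS S i) \<noteq> 0} \<le> card ((\<lambda>b. b * m + S b) ` {..<k})"
      by (intro card_mono) auto
    also have "\<dots> \<le> k" using card_image_le[of "{..<k}"] by simp
    finally show ?thesis using ks by linarith
  qed
  show ?thesis unfolding FTsD_def mem_Collect_eq
  proof (intro conjI allI impI)
    fix i assume "p \<le> i" then show "fS S i = 0" by (simp add: fS_def)
  next
    fix i show "0 \<le> fS S i" by (rule nonneg)
  qed (use sum1 sparse in auto)
qed

end


context LB begin

lemma sqrtn: "sqrt (real n) > 0" using n1 by simp

lemma Am_eq: "Am i j = (At i j + (au - 2 * al) / sqrt (real n)) / (2 * G * sqrt (real n))"
  unfolding Am_def sensA_def G_def by simp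

lemma Am_lb: assumes "i < n" "j < p" shows "1 / (2 * real n) \<le> Am i j"
proof -
  have "al / sqrt (real n) \<le> At i j" using Atb assms by blast
  then have "G / sqrt (real n) \<le> At i j + (au - 2 * al) / sqrt (real n)"
    unfolding G_def by (simp add: diff_divide_distrib add_divide_distrib field_simps)
  then have "G / sqrt (real n) / (2 * G * sqrt (real n)) \<le> Am i j"
    unfolding Am_eq using G_pos sqrtn by (intro divide_right_mono) auto
  moreover have "G / sqrt (real n) / (2 * G * sqrt (real n)) = 1 / (2 * real n)"
    using G_pos sqrtn n1 by (simp add: field_simps)
  ultimately show ?thesis by simp
qed

lemma rate_lb: assumes f: "f \<in> FTsD p s D" and i: "i < n"
  shows "1 / (2 * real n) \<le> matvec p Am f i"
proof -
  have nn: "\<And>j. j < p \<Longrightarrow> 0 \<le> f j" and s1: "(\<Sum>j<p. \<bar>f j\<bar>) = 1" using f unfolding FTsD_def by auto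
  have "(\<Sum>j<p. f j) = 1" using s1 nn by simp
  moreover have "(\<Sum>j<p. 1 / (2 * real n) * f j) = 1 / (2 * real n) * (\<Sum>j<p. f j)" by (rule sum_distrib_left[symmetric])
  ultimately have "1 / (2 * real n) = (\<Sum>j<p. 1 / (2 * real n) * f j)" by simp
  also have "\<dots> \<le> (\<Sum>j<p. Am i j * f j)"
    using Am_lb[OF i] nn by (intro sum_mono mult_right_mono) auto
  finally show ?thesis unfolding matvec_def .
qed

lemma rate_pos: assumes f: "f \<in> FTsD p s D" and i: "i < n" shows "0 < T * matvec p Am f i"
proof -
  have "0 < 1 / (2 * real n)" using n1 by simp
  then have "0 < matvec p Am f i" using rate_lb[OF f i] by linarith
  then show ?thesis using Tpos by simp
qed

lemma Am_diff: assumes "(\<Sum>j<p. f j) = (\<Sum>j<p. f' j)"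
  shows "matvec p Am f i - matvec p Am f' i = (\<Sum>j<p. At i j * (f j - f' j)) / (2 * G * sqrt (real n))"
proof -
  define \<beta> where "\<beta> = (au - 2 * al) / sqrt (real n) / (2 * G * sqrt (real n))"
  have e: "Am i j * x = At i j * x / (2 * G * sqrt (real n)) + \<beta> * x" for j x
    unfolding Am_eq \<beta>_def by (simp add: add_divide_distrib algebra_simps)
  have "matvec p Am f i - matvec p Am f' i = (\<Sum>j<p. Am i j * (f j - f' j))"
    unfolding matvec_def by (simp add: sum_subtractf[symmetric] algebra_simps)
  also have "\<dots> = (\<Sum>j<p. At i j * (f j - f' j) / (2 * G * sqrt (real n))) + \<beta> * (\<Sum>j<p. (f j - f' j))"
    unfolding e by (simp add: sum.distrib sum_distrib_left)
  also have "(\<Sum>j<p. (f j - f' j)) = 0" using assms by (simp add: sum_subtractf)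
  finally show ?thesis by (simp add: sum_divide_distrib)
qed

lemma delta_sum: "c < p \<Longrightarrow> (\<Sum>q<p. g q * (if q = c then 1 else 0)) = (g c :: real)"
proof -
  assume c: "c < p"
  have "(\<Sum>q<p. g q * (if q = c then 1 else 0)) = (\<Sum>q<p. if q = c then g q else 0)" by (intro sum.cong) auto
  also have "\<dots> = g c" using c by simp
  finally show ?thesis .
qed

lemma PS_upd: "S \<in> PS \<Longrightarrow> b < k \<Longrightarrow> j < m \<Longrightarrow> S(b := j) \<in> PS"
  unfolding PS_def by (auto simp: PiE_iff extensional_def)

lemma fS_diff: assumes b: "b < k" and i: "i < p"
  shows "fS (S(b := j)) i - fS S i = gam * (D i (col b j) - D i (col b (S b)))"
proof -
  have "(\<Sum>b'<k. D i (col b' ((S(b := j)) b'))) - (\<Sum>b'<k. D i (col b' (S b')))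
      = (\<Sum>b'<k. if b' = b then D i (col b j) - D i (col b (S b)) else 0)"
    unfolding sum_subtractf[symmetric] by (intro sum.cong) auto
  also have "\<dots> = D i (col b j) - D i (col b (S b))" using b by simp
  finally have e: "(\<Sum>b'<k. D i (col b' ((S(b := j)) b'))) - (\<Sum>b'<k. D i (col b' (S b'))) = D i (col b j) - D i (col b (S b))" .
  have "fS (S(b := j)) i - fS S i = gam * ((\<Sum>b'<k. D i (col b' ((S(b := j)) b'))) - (\<Sum>b'<k. D i (col b' (S b'))))"
    using i unfolding fS_def by (simp only: if_True right_diff_distrib)
  then show ?thesis using e by simp
qed

lemma fS_sum: "S \<in> PS \<Longrightarrow> (\<Sum>j<p. fS S j) = 1"
  using fS_in[of S] unfolding FTsD_def by auto

lemma chi_bound: assumes S: "S \<in> PS" and b: "b < k" and j: "j < m"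
  shows "(\<Sum>i<n. (T * matvec p Am (fS (S(b := j))) i - T * matvec p Am (fS S) i)\<^sup>2 / (T * matvec p Am (fS S) i))
     \<le> T * (1 + \<delta>) * gam\<^sup>2 / G\<^sup>2"
proof -
  define c1 where "c1 = col b j"
  define c0 where "c0 = col b (S b)"
  have c1: "c1 < p" unfolding c1_def using col_lt b j by simp
  have c0: "c0 < p" unfolding c0_def using col_lt b PS_lt[OF S b] by simp
  define u where "u = (\<lambda>q. gam * ((if q = c1 then 1 else 0) - (if q = c0 then 1 else 0)))"
  have S': "S(b := j) \<in> PS" using PS_upd S b j by simp
  define h where "h = (\<lambda>i. \<Sum>jj<p. At i jj * (fS (S(b := j)) jj - fS S jj))"
  have hu: "h i = matvec p At (matvec p D u) i" for i
  proof -
    have "matvec p D u jj = gam * (D jj c1 - D jj c0)" for jj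
    proof -
      have "matvec p D u jj = gam * (\<Sum>q<p. D jj q * (if q = c1 then 1 else 0)) - gam * (\<Sum>q<p. D jj q * (if q = c0 then 1 else 0))"
        unfolding matvec_def u_def by (simp add: sum_distrib_left sum_subtractf[symmetric] algebra_simps)
      also have "\<dots> = gam * (D jj c1 - D jj c0)" using delta_sum[OF c1] delta_sum[OF c0] by (simp add: algebra_simps)
      finally show ?thesis .
    qed
    then show ?thesis unfolding h_def matvec_def using fS_diff[OF b]
      by (intro sum.cong refl) (simp add: c1_def c0_def)
  qed
  have iso_u: "(\<Sum>i<n. (h i)\<^sup>2) \<le> (1 + \<delta>) * (\<Sum>q<p. (u q)\<^sup>2)"
  proof -
    have "(\<forall>q. p \<le> q \<longrightarrow> u q = 0)" unfolding u_def using c1 c0 by auto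
    moreover have "card {q. q < p \<and> u q \<noteq> 0} \<le> 2 * s"
    proof -
      have "{q. q < p \<and> u q \<noteq> 0} \<subseteq> {c1, c0}" unfolding u_def by auto
      then have "card {q. q < p \<and> u q \<noteq> 0} \<le> card {c1, c0}" by (intro card_mono) auto
      also have "\<dots> \<le> 2" by (simp add: card_insert_le_m1)
      finally show ?thesis using ks k1 by linarith
    qed
    ultimately show ?thesis using iso hu by simp
  qed
  have usq: "(\<Sum>q<p. (u q)\<^sup>2) \<le> 2 * gam\<^sup>2"
  proof -
    have "(\<Sum>q<p. (u q)\<^sup>2) \<le> (\<Sum>q<p. gam\<^sup>2 * ((if q = c1 then 1 else 0) + (if q = c0 then 1 else 0)))"
      unfolding u_def by (intro sum_mono) (auto simp: power_mult_distrib power2_eq_square)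
    also have "\<dots> = 2 * gam\<^sup>2" using c1 c0 by (simp add: sum.distrib sum_distrib_left[symmetric])
    finally show ?thesis .
  qed
  have trm: "(T * matvec p Am (fS (S(b := j))) i - T * matvec p Am (fS S) i)\<^sup>2 / (T * matvec p Am (fS S) i)
       \<le> T * (h i)\<^sup>2 / (2 * G\<^sup>2)" if i: "i < n" for i
  proof -
    have diff: "T * matvec p Am (fS (S(b := j))) i - T * matvec p Am (fS S) i = T * h i / (2 * G * sqrt (real n))"
      using Am_diff[of "fS (S(b := j))" "fS S" i] fS_sum[OF S'] fS_sum[OF S]
      unfolding h_def by (simp add: right_diff_distrib[symmetric])
    have lb: "T / (2 * real n) \<le> T * matvec p Am (fS S) i"
      using mult_left_mono[OF rate_lb[OF fS_in[OF S] i], of T] Tpos by simp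
    have pos: "0 < T / (2 * real n)" using Tpos n1 by simp
    have "(T * h i / (2 * G * sqrt (real n)))\<^sup>2 / (T * matvec p Am (fS S) i)
        \<le> (T * h i / (2 * G * sqrt (real n)))\<^sup>2 / (T / (2 * real n))"
    proof (rule divide_left_mono[OF lb])
      have "0 < T * matvec p Am (fS S) i" using lb pos by linarith
      then show "0 < T * matvec p Am (fS S) i * (T / (2 * real n))" using pos by (rule mult_pos_pos)
    qed simp
    also have "\<dots> = T * (h i)\<^sup>2 / (2 * G\<^sup>2)"
      using Tpos G_pos sqrtn n1 by (simp add: field_simps power2_eq_square)
    finally show ?thesis using diff by simp
  qed
  have "(\<Sum>i<n. (T * matvec p Am (fS (S(b := j))) i - T * matvec p Am (fS S) i)\<^sup>2 / (T * matvec p Am (fS S) i))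
      \<le> (\<Sum>i<n. T * (h i)\<^sup>2 / (2 * G\<^sup>2))" by (intro sum_mono trm) auto
  also have "\<dots> = T / (2 * G\<^sup>2) * (\<Sum>i<n. (h i)\<^sup>2)" by (simp add: sum_distrib_left)
  also have "\<dots> \<le> T / (2 * G\<^sup>2) * ((1 + \<delta>) * (2 * gam\<^sup>2))"
  proof (intro mult_left_mono)
    show "(\<Sum>i<n. (h i)\<^sup>2) \<le> (1 + \<delta>) * (2 * gam\<^sup>2)"
      using iso_u usq dl0 by (meson add_nonneg_nonneg mult_left_mono order_trans zero_le_one)
  qed (use Tpos in auto)
  also have "\<dots> = T * (1 + \<delta>) * gam\<^sup>2 / G\<^sup>2" using G_pos by (simp add: field_simps)
  finally show ?thesis .
qed

end


context LB begin

lemma bessel: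
  fixes I :: "'i set" and c :: "'i \<Rightarrow> nat" and x :: "nat \<Rightarrow> real"
  assumes I: "finite I" and cinj: "inj_on c I" and clt: "\<And>t. t \<in> I \<Longrightarrow> c t < p"
  shows "(\<Sum>t\<in>I. (\<Sum>i<p. D i (c t) * x i)\<^sup>2) \<le> (\<Sum>i<p. (x i)\<^sup>2)"
proof -
  define \<alpha> where "\<alpha> t = (\<Sum>i<p. D i (c t) * x i)" for t
  define z where "z i = (\<Sum>t\<in>I. \<alpha> t * D i (c t))" for i
  have on: "(\<Sum>i<p. D i (c t) * D i (c t')) = (if t = t' then 1 else 0)" if "t \<in> I" "t' \<in> I" for t t'
    using orthD[OF clt[OF that(1)] clt[OF that(2)]] cinj that by (auto simp: inj_on_def)
  have xz: "(\<Sum>i<p. x i * z i) = (\<Sum>t\<in>I. (\<alpha> t)\<^sup>2)"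
  proof -
    have "(\<Sum>i<p. x i * z i) = (\<Sum>t\<in>I. \<alpha> t * (\<Sum>i<p. D i (c t) * x i))"
      unfolding z_def by (simp add: sum_distrib_left sum_distrib_right sum.swap[of _ I] algebra_simps)
    then show ?thesis by (simp add: \<alpha>_def power2_eq_square)
  qed
  have zz: "(\<Sum>i<p. (z i)\<^sup>2) = (\<Sum>t\<in>I. (\<alpha> t)\<^sup>2)"
  proof -
    have "(\<Sum>i<p. (z i)\<^sup>2) = (\<Sum>i<p. \<Sum>t\<in>I. \<Sum>t'\<in>I. \<alpha> t * \<alpha> t' * (D i (c t) * D i (c t')))"
      unfolding z_def power2_eq_square by (simp add: sum_product algebra_simps)
    also have "\<dots> = (\<Sum>t\<in>I. \<Sum>t'\<in>I. \<alpha> t * \<alpha> t' * (\<Sum>i<p. D i (c t) * D i (c t')))"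
      by (simp add: sum.swap[of _ "{..<p}"] sum_distrib_left)
    also have "\<dots> = (\<Sum>t\<in>I. \<Sum>t'\<in>I. \<alpha> t * \<alpha> t' * (if t = t' then 1 else 0))"
      by (intro sum.cong refl) (simp add: on)
    also have "\<dots> = (\<Sum>t\<in>I. (\<alpha> t)\<^sup>2)" using I by (simp add: power2_eq_square if_distrib cong: if_cong)
    finally show ?thesis .
  qed
  have "0 \<le> (\<Sum>i<p. (x i - z i)\<^sup>2)" by (intro sum_nonneg) auto
  also have "\<dots> = (\<Sum>i<p. (x i)\<^sup>2) - 2 * (\<Sum>i<p. x i * z i) + (\<Sum>i<p. (z i)\<^sup>2)"
    by (simp add: power2_diff sum.distrib sum_subtractf sum_distrib_left algebra_simps)
  finally show ?thesis using xz zz by (simp add: \<alpha>_def)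
qed

end


context LB begin

definition "W fhat y b j = (\<Sum>i<p. D i (col b j) * fhat y i)"
definition "Aset fhat b j = {y. (\<Sum>j'<m. (W fhat y b j' - gam * (if j' = j then 1 else 0))\<^sup>2) < gam\<^sup>2 / 2}"

lemma Aset_disj: assumes "j < m" "j' < m" "j \<noteq> j'"
  shows "Aset fhat b j \<inter> Aset fhat b j' = {}"
proof (rule ccontr)
  assume "Aset fhat b j \<inter> Aset fhat b j' \<noteq> {}"
  then obtain y where y1: "y \<in> Aset fhat b j" and y2: "y \<in> Aset fhat b j'" by blast
  define e where "e l j0 = gam * (if l = j0 then 1 else 0)" for l j0 :: nat
  define x where "x l = W fhat y b l" for l
  have s1: "(\<Sum>l<m. (x l - e l j)\<^sup>2) < gam\<^sup>2 / 2" using y1 unfolding Aset_def x_def e_def by simp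
  have s2: "(\<Sum>l<m. (x l - e l j')\<^sup>2) < gam\<^sup>2 / 2" using y2 unfolding Aset_def x_def e_def by simp
  have pt: "(e l j - e l j')\<^sup>2 \<le> 2 * (x l - e l j)\<^sup>2 + 2 * (x l - e l j')\<^sup>2" for l
  proof -
    have "0 \<le> (2 * x l - e l j - e l j')\<^sup>2" by simp
    then show ?thesis by (simp add: power2_eq_square algebra_simps)
  qed
  have "(\<Sum>l<m. (e l j - e l j')\<^sup>2) = (\<Sum>l<m. gam\<^sup>2 * ((if l = j then 1 else 0) + (if l = j' then 1 else 0)))"
    unfolding e_def using assms(3) by (intro sum.cong refl) (auto simp: power2_eq_square)
  also have "\<dots> = 2 * gam\<^sup>2" using assms by (simp add: sum.distrib sum_distrib_left[symmetric])
  finally have "2 * gam\<^sup>2 \<le> (\<Sum>l<m. 2 * (x l - e l j)\<^sup>2 + 2 * (x l - e l j')\<^sup>2)"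
    by (metis (no_types, lifting) pt sum_mono)
  also have "\<dots> = 2 * (\<Sum>l<m. (x l - e l j)\<^sup>2) + 2 * (\<Sum>l<m. (x l - e l j')\<^sup>2)"
    by (simp add: sum.distrib sum_distrib_left)
  finally show False using s1 s2 by linarith
qed

lemma col_sum_ind: assumes S: "S \<in> PS" and b: "b < k" and j: "j < m"
  shows "(\<Sum>b'<k. if col b j = col b' (S b') then 1 else 0 :: real) = (if j = S b then 1 else 0)"
proof -
  have "(\<Sum>b'<k. if col b j = col b' (S b') then 1 else 0 :: real) = (\<Sum>b'<k. if b' = b then (if j = S b then 1 else 0) else 0)"
  proof (intro sum.cong refl)
    fix b' assume "b' \<in> {..<k}"
    then have "S b' < m" using PS_lt[OF S] by simp
    then show "(if col b j = col b' (S b') then 1 else 0 :: real) = (if b' = b then (if j = S b then 1 else 0) else 0)"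
      using col_inj[OF j, of "S b'" b b'] by auto
  qed
  also have "\<dots> = (if j = S b then 1 else 0)" using b by simp
  finally show ?thesis .
qed

lemma loss_lb: assumes S: "S \<in> PS"
  shows "gam\<^sup>2 / 2 * (\<Sum>b<k. indicator (- Aset fhat b (S b)) y) \<le> (\<Sum>i<p. (fhat y i - fS S i)\<^sup>2)"
proof -
  define x where "x i = fhat y i - fS S i" for i
  have inner: "(\<Sum>i<p. D i (col b j) * x i) = W fhat y b j - gam * (if j = S b then 1 else 0)"
    if b: "b < k" and j: "j < m" for b j
  proof -
    have "(\<Sum>i<p. D i (col b j) * x i) = W fhat y b j - (\<Sum>i<p. D i (col b j) * fS S i)"
      unfolding x_def W_def by (simp add: right_diff_distrib sum_subtractf)
    also have "(\<Sum>i<p. D i (col b j) * fS S i) = gam * (\<Sum>b'<k. if col b j = col b' (S b') then 1 else 0)"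
      using inner_fS[OF S col_ge1 col_lt[OF b j]] .
    also have "(\<Sum>b'<k. if col b j = col b' (S b') then 1 else 0 :: real) = (if j = S b then 1 else 0)"
      by (rule col_sum_ind[OF S b j])
    finally show ?thesis .
  qed
  have bes: "(\<Sum>t\<in>{..<k} \<times> {..<m}. (\<Sum>i<p. D i (case t of (b, j) \<Rightarrow> col b j) * x i)\<^sup>2) \<le> (\<Sum>i<p. (x i)\<^sup>2)"
  proof (rule bessel)
    show "inj_on (\<lambda>t. case t of (b, j) \<Rightarrow> col b j) ({..<k} \<times> {..<m})"
      by (rule inj_onI) (auto dest: col_inj)
  qed (auto intro: col_lt)
  have "(\<Sum>t\<in>{..<k} \<times> {..<m}. (\<Sum>i<p. D i (case t of (b, j) \<Rightarrow> col b j) * x i)\<^sup>2)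
      = (\<Sum>b<k. \<Sum>j<m. (W fhat y b j - gam * (if j = S b then 1 else 0))\<^sup>2)"
    unfolding sum.cartesian_product by (intro sum.cong refl) (auto simp: inner)
  moreover have "gam\<^sup>2 / 2 * indicator (- Aset fhat b (S b)) y \<le> (\<Sum>j<m. (W fhat y b j - gam * (if j = S b then 1 else 0))\<^sup>2)" for b
  proof (cases "y \<in> Aset fhat b (S b)")
    case True then show ?thesis by (simp add: sum_nonneg)
  next
    case False then show ?thesis unfolding Aset_def by (simp add: not_less eq_commute[of _ "S b"])
  qed
  ultimately have "gam\<^sup>2 / 2 * (\<Sum>b<k. indicator (- Aset fhat b (S b)) y) \<le> (\<Sum>i<p. (x i)\<^sup>2)"
    using bes by (smt (verit, ccfv_SIG) sum_distrib_left sum_mono)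
  then show ?thesis unfolding x_def .
qed

end


context LB begin

definition "PP S = obs_law n p T Am (fS S)"

lemma risk_lb: assumes S: "S \<in> PS"
  shows "ennreal (gam\<^sup>2 / 2 * (\<Sum>b<k. 1 - measure_pmf.prob (PP S) (Aset fhat b (S b))))
       \<le> risk n p T Am fhat (fS S)"
proof -
  let ?M = "measure_pmf (PP S)"
  define g where "g y = gam\<^sup>2 / 2 * (\<Sum>b<k. indicator (- Aset fhat b (S b)) y :: real)" for y
  have ind: "integrable ?M (indicator X :: _ \<Rightarrow> real)" for X
    by (rule integrable_real_indicator) (auto simp: measure_pmf.emeasure_eq_measure)
  have int: "integrable ?M g" unfolding g_def
    by (intro integrable_mult_right integrable_sum) (use ind in auto)
  have "(\<integral>\<^sup>+ y. ennreal (g y) \<partial>?M) = ennreal (\<integral> y. g y \<partial>?M)"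
    by (rule nn_integral_eq_integral[OF int]) (auto simp: g_def intro!: sum_nonneg AE_I2 mult_nonneg_nonneg)
  also have "(\<integral> y. g y \<partial>?M) = gam\<^sup>2 / 2 * (\<Sum>b<k. measure_pmf.prob (PP S) (- Aset fhat b (S b)))"
  proof -
    have "(\<integral> y. (\<Sum>b<k. indicator (- Aset fhat b (S b)) y :: real) \<partial>?M) = (\<Sum>b<k. \<integral> y. indicator (- Aset fhat b (S b)) y \<partial>?M)"
      by (rule Bochner_Integration.integral_sum) (use ind in auto)
    then show ?thesis unfolding g_def by simp
  qed
  also have "(\<Sum>b<k. measure_pmf.prob (PP S) (- Aset fhat b (S b))) = (\<Sum>b<k. 1 - measure_pmf.prob (PP S) (Aset fhat b (S b)))"
    by (intro sum.cong refl) (simp add: measure_pmf.prob_compl[symmetric] Compl_eq_Diff_UNIV)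
  finally have e: "(\<integral>\<^sup>+ y. ennreal (g y) \<partial>?M) = ennreal (gam\<^sup>2 / 2 * (\<Sum>b<k. 1 - measure_pmf.prob (PP S) (Aset fhat b (S b))))" .
  have "(\<integral>\<^sup>+ y. ennreal (g y) \<partial>?M) \<le> (\<integral>\<^sup>+ y. ennreal (\<Sum>i<p. (fhat y i - fS S i)\<^sup>2) \<partial>?M)"
    by (intro nn_integral_mono ennreal_leI) (unfold g_def, rule loss_lb[OF S])
  then show ?thesis using e unfolding risk_def PP_def by simp
qed

end


context LB begin

lemma E_bound: "T * (1 + \<delta>) * gam\<^sup>2 / G\<^sup>2 \<le> ln (real m / 2)"
proof -
  have t: "0 < T * (1 + \<delta>)" using Tpos dl0 by simp
  have "gam\<^sup>2 \<le> G\<^sup>2 * ln (real m / 2) / (T * (1 + \<delta>))" using gam2 by simp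
  then have "T * (1 + \<delta>) * gam\<^sup>2 \<le> G\<^sup>2 * ln (real m / 2)" using t by (simp add: field_simps)
  then show ?thesis using G_pos by (simp add: field_simps)
qed

lemma pair_bound: assumes S: "S \<in> PS" and b: "b < k" and j: "j < m"
  shows "measure_pmf.prob (PP (S(b := j))) X \<le> real m / 2 * measure_pmf.prob (PP S) X + (real m / 2) / (4 * (real m / 2))"
proof -
  define a where "a i = T * matvec p Am (fS (S(b := j))) i" for i
  define c where "c i = T * matvec p Am (fS S) i" for i
  have S': "S(b := j) \<in> PS" using PS_upd S b j by simp
  have apos: "\<And>i. i \<in> {..<n} \<Longrightarrow> 0 < a i" unfolding a_def using rate_pos[OF fS_in[OF S']] by simp
  have cpos: "\<And>i. i \<in> {..<n} \<Longrightarrow> 0 < c i" unfolding c_def using rate_pos[OF fS_in[OF S]] by simp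
  have PPa: "PP (S(b := j)) = Pi_pmf {..<n} 0 (\<lambda>i. poisson_pmf (a i))" unfolding PP_def obs_law_def a_def ..
  have PPc: "PP S = Pi_pmf {..<n} 0 (\<lambda>i. poisson_pmf (c i))" unfolding PP_def obs_law_def c_def ..
  define E where "E = (\<Sum>i<n. (a i - c i)\<^sup>2 / c i)"
  have E: "E \<le> ln (real m / 2)" using chi_bound[OF S b j] E_bound unfolding E_def a_def c_def by linarith
  have expE: "exp E \<le> real m / 2"
  proof -
    have "exp E \<le> exp (ln (real m / 2))" using E by simp
    also have "\<dots> = real m / 2" using m3 by simp
    finally show ?thesis .
  qed
  have u: "0 < real m / 2" using m3 by simp
  have "measure_pmf.prob (PP (S(b := j))) X \<le> real m / 2 * measure_pmf.prob (PP S) X + exp E / (4 * (real m / 2))"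
    unfolding PPa PPc
  proof (rule key_ineq)
    show "\<And>y. pmf (Pi_pmf {..<n} 0 (\<lambda>i. poisson_pmf (c i))) y = 0 \<Longrightarrow> pmf (Pi_pmf {..<n} 0 (\<lambda>i. poisson_pmf (a i))) y = 0"
      by (rule Pi_poisson_ac) (use cpos in auto)
    show "(\<integral>\<^sup>+ y. ennreal (pmf (Pi_pmf {..<n} 0 (\<lambda>i. poisson_pmf (a i))) y / pmf (Pi_pmf {..<n} 0 (\<lambda>i. poisson_pmf (c i))) y)
            \<partial>measure_pmf (Pi_pmf {..<n} 0 (\<lambda>i. poisson_pmf (a i)))) = ennreal (exp E)"
      unfolding E_def by (rule Pi_poisson_rho) (use apos cpos in auto)
  qed (use u in auto)
  also have "exp E / (4 * (real m / 2)) \<le> (real m / 2) / (4 * (real m / 2))"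
    using expE u by (intro divide_right_mono) auto
  finally show ?thesis by simp
qed

lemma block_bound: assumes S: "S \<in> PS" and b: "b < k"
  shows "(\<Sum>j<m. measure_pmf.prob (PP (S(b := j))) (Aset fhat b j)) \<le> 3 * real m / 4"
proof -
  have u: "0 < real m / 2" using m3 by simp
  have "(\<Sum>j<m. measure_pmf.prob (PP (S(b := j))) (Aset fhat b j))
      \<le> real m / 2 + real (card {..<m}) * ((real m / 2) / (4 * (real m / 2)))"
  proof (rule fano_sum)
    show "disjoint_family_on (Aset fhat b) {..<m}"
      unfolding disjoint_family_on_def using Aset_disj by (metis disjoint_iff lessThan_iff)
  qed (use u pair_bound[OF S b] in auto)
  also have "\<dots> = 3 * real m / 4" using u by (simp add: field_simps)
  finally show ?thesis .
qed

end


lemma exists_ge_avg: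
  fixes f :: "'a \<Rightarrow> real"
  assumes "finite A" "A \<noteq> {}" "real (card A) * c \<le> (\<Sum>x\<in>A. f x)"
  shows "\<exists>x\<in>A. c \<le> f x"
proof (rule ccontr)
  assume "\<not> (\<exists>x\<in>A. c \<le> f x)"
  then have "\<forall>x\<in>A. f x < c" by auto
  then have "(\<Sum>x\<in>A. f x) < (\<Sum>x\<in>A. c)" using assms by (intro sum_strict_mono) auto
  then show False using assms by simp
qed

context LB begin

lemma sum_PS_split: assumes b: "b < k"
  shows "(\<Sum>S\<in>PS. g S) = (\<Sum>\<sigma>\<in>PiE ({..<k} - {b}) (\<lambda>_. {..<m}). \<Sum>j<m. g (\<sigma>(b := j)))"
proof -
  have K: "{..<k} = insert b ({..<k} - {b})" using b by auto
  have K': "insert b ({..<k} - {b}) = {..<k}" using b by auto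
  have "PS = PiE (insert b ({..<k} - {b})) (\<lambda>_. {..<m})" unfolding PS_def K' ..
  also have "\<dots> = (\<lambda>(y, g). g(b := y)) ` ({..<m} \<times> PiE ({..<k} - {b}) (\<lambda>_. {..<m}))"
    by (rule PiE_insert_eq)
  finally have PSe: "PS = (\<lambda>(y, g). g(b := y)) ` ({..<m} \<times> PiE ({..<k} - {b}) (\<lambda>_. {..<m}))" .
  have inj: "inj_on (\<lambda>(y, g). g(b := y)) ({..<m} \<times> PiE ({..<k} - {b}) (\<lambda>_. {..<m}))"
    using inj_combinator[of b "{..<k} - {b}" "\<lambda>_. {..<m}"] by simp
  have "(\<Sum>S\<in>PS. g S) = (\<Sum>t\<in>{..<m} \<times> PiE ({..<k} - {b}) (\<lambda>_. {..<m}). g (case t of (y, h) \<Rightarrow> h(b := y)))"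
    unfolding PSe by (subst sum.reindex[OF inj]) simp
  also have "\<dots> = (\<Sum>j<m. \<Sum>\<sigma>\<in>PiE ({..<k} - {b}) (\<lambda>_. {..<m}). g (\<sigma>(b := j)))"
    unfolding sum.cartesian_product by (intro sum.cong refl) auto
  also have "\<dots> = (\<Sum>\<sigma>\<in>PiE ({..<k} - {b}) (\<lambda>_. {..<m}). \<Sum>j<m. g (\<sigma>(b := j)))"
    by (rule sum.swap)
  finally show ?thesis .
qed

lemma PS_finite: "finite PS" unfolding PS_def by (intro finite_PiE) auto

lemma PS_ne: "PS \<noteq> {}"
proof -
  have "(\<lambda>b. if b < k then 0 else undefined) \<in> PS" unfolding PS_def using m3
    by (auto simp: PiE_iff extensional_def split: if_splits)
  then show ?thesis by blast
qed

lemma avg_block: assumes b: "b < k"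
  shows "(\<Sum>S\<in>PS. measure_pmf.prob (PP S) (Aset fhat b (S b))) \<le> 3 / 4 * real (card PS)"
proof -
  let ?Sg = "PiE ({..<k} - {b}) (\<lambda>_. {..<m})"
  have "(\<Sum>S\<in>PS. measure_pmf.prob (PP S) (Aset fhat b (S b)))
      = (\<Sum>\<sigma>\<in>?Sg. \<Sum>j<m. measure_pmf.prob (PP (\<sigma>(b := j))) (Aset fhat b j))"
    using sum_PS_split[OF b, of "\<lambda>S. measure_pmf.prob (PP S) (Aset fhat b (S b))"] by simp
  also have "\<dots> \<le> (\<Sum>\<sigma>\<in>?Sg. 3 * real m / 4)"
  proof (intro sum_mono)
    fix \<sigma> assume \<sigma>: "\<sigma> \<in> ?Sg"
    have S0: "\<sigma>(b := 0) \<in> PS" using \<sigma> m3 b unfolding PS_def by (auto simp: PiE_iff extensional_def)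
    have "(\<Sum>j<m. measure_pmf.prob (PP ((\<sigma>(b := 0))(b := j))) (Aset fhat b j)) \<le> 3 * real m / 4"
      by (rule block_bound[OF S0 b])
    then show "(\<Sum>j<m. measure_pmf.prob (PP (\<sigma>(b := j))) (Aset fhat b j)) \<le> 3 * real m / 4" by simp
  qed
  also have "\<dots> = 3 / 4 * (real m * real (card ?Sg))" by simp
  also have "real m * real (card ?Sg) = real (card PS)"
    using sum_PS_split[OF b, of "\<lambda>_. 1::real"] by simp
  finally show ?thesis .
qed

lemma main_k: "ennreal (gam\<^sup>2 * real k / 8) \<le> (SUP f\<in>FTsD p s D. risk n p T Am fhat f)"
proof -
  let ?N = "real (card PS)"
  define v where "v S = gam\<^sup>2 / 2 * (\<Sum>b<k. 1 - measure_pmf.prob (PP S) (Aset fhat b (S b)))" for S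
  define q where "q S = (\<Sum>b<k. measure_pmf.prob (PP S) (Aset fhat b (S b)))" for S
  have e1: "v S = gam\<^sup>2 / 2 * real k - gam\<^sup>2 / 2 * q S" for S
    unfolding v_def q_def by (simp add: sum_subtractf right_diff_distrib)
  have "(\<Sum>S\<in>PS. q S) = (\<Sum>b<k. \<Sum>S\<in>PS. measure_pmf.prob (PP S) (Aset fhat b (S b)))"
    unfolding q_def by (rule sum.swap)
  also have "\<dots> \<le> (\<Sum>b<k. 3 / 4 * ?N)" using avg_block by (intro sum_mono) auto
  also have "\<dots> = real k * (3 / 4 * ?N)" by simp
  finally have qb: "(\<Sum>S\<in>PS. q S) \<le> real k * (3 / 4 * ?N)" .
  have "(\<Sum>S\<in>PS. v S) = ?N * (gam\<^sup>2 / 2 * real k) - gam\<^sup>2 / 2 * (\<Sum>S\<in>PS. q S)"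
    unfolding e1 by (simp add: sum_subtractf sum_distrib_left)
  also have "\<dots> \<ge> ?N * (gam\<^sup>2 / 2 * real k) - gam\<^sup>2 / 2 * (real k * (3 / 4 * ?N))"
    using qb by (intro diff_left_mono mult_left_mono) auto
  finally have "real (card PS) * (gam\<^sup>2 * real k / 8) \<le> (\<Sum>S\<in>PS. v S)" by (simp add: algebra_simps)
  then obtain S where S: "S \<in> PS" and vS: "gam\<^sup>2 * real k / 8 \<le> v S"
    using exists_ge_avg[OF PS_finite PS_ne] by blast
  have "ennreal (gam\<^sup>2 * real k / 8) \<le> ennreal (v S)" using vS by (rule ennreal_leI)
  also have "\<dots> \<le> risk n p T Am fhat (fS S)" unfolding v_def by (rule risk_lb[OF S])
  also have "\<dots> \<le> (SUP f\<in>FTsD p s D. risk n p T Am fhat f)" using fS_in[OF S] by (rule SUP_upper)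
  finally show ?thesis .
qed

end


context LB begin

lemma ln_ratio: "ln ((real p - real k - 1) / (real k / 2)) \<le> 5 * ln (real m / 2)"
  and ln_ratio_nonneg: "0 \<le> ln ((real p - real k - 1) / (real k / 2))"
proof -
  have kpos: "0 < real k" using k1 by simp
  have p4: "real p \<ge> 3 * real k + 4" using p3k by linarith
  have dlt: "real p - 1 < (real m + 1) * real k"
  proof -
    have "p - 1 < (m + 1) * k" by (rule d_lt)
    then have "real (p - 1) < real ((m + 1) * k)" by linarith
    then show ?thesis using p10 by (simp add: of_nat_diff algebra_simps)
  qed
  have x1: "1 \<le> (real p - real k - 1) / (real k / 2)" using kpos p4 by (simp add: field_simps)
  have x2: "(real p - real k - 1) / (real k / 2) \<le> 2 * real m" using kpos dlt by (simp add: field_simps)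
  have m3r: "3 \<le> real m" using m3 by simp
  have "2 * real m \<le> (real m / 2) ^ 5"
  proof -
    have "64 \<le> real m ^ 4"
    proof -
      have "(3::real) ^ 4 \<le> real m ^ 4" using m3r by (intro power_mono) auto
      then show ?thesis by simp
    qed
    then have "64 * real m \<le> real m ^ 4 * real m" using m3r by (intro mult_right_mono) auto
    then have "2 * real m * 32 \<le> real m ^ 4 * real m" by simp
    moreover have "real m ^ 4 * real m = real m ^ 5" by (simp add: numeral_eq_Suc)
    ultimately have "2 * real m * 32 \<le> real m ^ 5" by simp
    then show ?thesis by (simp add: power_divide)
  qed
  have "ln ((real p - real k - 1) / (real k / 2)) \<le> ln (2 * real m)" using x1 x2 by simp
  also have "\<dots> \<le> ln ((real m / 2) ^ 5)" using \<open>2 * real m \<le> (real m / 2) ^ 5\<close> m3r by simp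
  also have "\<dots> = 5 * ln (real m / 2)" using m3r by (simp add: ln_realpow)
  finally show "ln ((real p - real k - 1) / (real k / 2)) \<le> 5 * ln (real m / 2)" .
  show "0 \<le> ln ((real p - real k - 1) / (real k / 2))" using x1 by simp
qed

lemma final_k:
  "ennreal (min 1 (G\<^sup>2 / 5) / 8 * min (real k / ((real p)\<^sup>2 * lam\<^sup>2))
        (real k / ((1 + \<delta>) * T) * ln ((real p - real k - 1) / (real k / 2))))
   \<le> (SUP f\<in>FTsD p s D. risk n p T Am fhat f)"
proof -
  define a where "a = real k / ((real p)\<^sup>2 * lam\<^sup>2)"
  define bb where "bb = real k / ((1 + \<delta>) * T) * ln ((real p - real k - 1) / (real k / 2))"
  define c where "c = min 1 (G\<^sup>2 / 5)"
  have t: "0 < T * (1 + \<delta>)" using Tpos dl0 by simp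
  have a0: "0 \<le> a" unfolding a_def by simp
  have b0: "0 \<le> bb" unfolding bb_def using ln_ratio_nonneg t by (simp add: mult.commute)
  have c0: "0 \<le> c" "c \<le> 1" "c \<le> G\<^sup>2 / 5" unfolding c_def by auto
  have "c * min a bb \<le> gam\<^sup>2 * real k"
  proof (cases "1 / ((real p)\<^sup>2 * lam\<^sup>2) \<le> G\<^sup>2 * ln (real m / 2) / (T * (1 + \<delta>))")
    case True
    then have "gam\<^sup>2 * real k = a" using gam2 unfolding a_def by simp
    moreover have "c * min a bb \<le> min a bb" using c0 a0 b0 by (intro mult_left_le_one_le) auto
    ultimately show ?thesis by simp
  next
    case False
    then have g: "gam\<^sup>2 * real k = G\<^sup>2 * ln (real m / 2) / (T * (1 + \<delta>)) * real k" using gam2 by simp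
    have "c * min a bb \<le> G\<^sup>2 / 5 * bb" using c0 a0 b0
    proof -
      have "c * min a bb \<le> c * bb" using c0 by (intro mult_left_mono) auto
      also have "\<dots> \<le> G\<^sup>2 / 5 * bb" using c0 b0 by (intro mult_right_mono) auto
      finally show ?thesis .
    qed
    also have "\<dots> = G\<^sup>2 * real k / (T * (1 + \<delta>)) * (ln ((real p - real k - 1) / (real k / 2)) / 5)"
      unfolding bb_def by (simp add: field_simps)
    also have "\<dots> \<le> G\<^sup>2 * real k / (T * (1 + \<delta>)) * ln (real m / 2)"
      using ln_ratio t by (intro mult_left_mono) auto
    also have "\<dots> = gam\<^sup>2 * real k" using g by (simp add: field_simps)
    finally show ?thesis .
  qed
  then have "ennreal (c / 8 * min a bb) \<le> ennreal (gam\<^sup>2 * real k / 8)" by (intro ennreal_leI) simp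
  also have "\<dots> \<le> (SUP f\<in>FTsD p s D. risk n p T Am fhat f)" by (rule main_k)
  finally show ?thesis unfolding a_def bb_def c_def .
qed

end


theorem theorem1:
  fixes al au :: real
  assumes "al < au"
  shows "\<exists>CL>0. \<forall>(n::nat) (p::nat) (s::nat) (T::real) (D::nat \<Rightarrow> nat \<Rightarrow> real)
            (At::nat \<Rightarrow> nat \<Rightarrow> real) (\<delta>::real) (fhat::(nat \<Rightarrow> nat) \<Rightarrow> nat \<Rightarrow> real).
     1 \<le> n \<longrightarrow> 10 \<le> p \<longrightarrow> 1 \<le> s \<longrightarrow> real s < real p / 3 - 1 \<longrightarrow> 0 < T \<longrightarrow>
     orthonormal_mat p D \<longrightarrow> first_col_const p D \<longrightarrow>
     (\<forall>i<n. \<forall>j<p. al / sqrt (real n) \<le> At i j \<and> At i j \<le> au / sqrt (real n)) \<longrightarrow>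
     0 \<le> \<delta> \<longrightarrow> \<delta> < 1 \<longrightarrow>
     (\<forall>u::nat \<Rightarrow> real. (\<forall>j. p \<le> j \<longrightarrow> u j = 0) \<longrightarrow> card {j. j < p \<and> u j \<noteq> 0} \<le> 2 * s \<longrightarrow>
        (\<Sum>i<n. (matvec p At (matvec p D u) i)\<^sup>2) \<le> (1 + \<delta>) * (\<Sum>j<p. (u j)\<^sup>2)) \<longrightarrow>
     (SUP f\<in>FTsD p s D. risk n p T (sensA al au n At) fhat f)
       \<ge> ennreal (CL * Max ((\<lambda>k. min
             (real k / ((real p)\<^sup>2 * (lambda_loc p (p - 1) (Dbar D) k)\<^sup>2))
             (real k / ((1 + \<delta>) * T) * ln ((real p - real k - 1) / (real k / 2)))) ` {1..s}))"
proof -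
  define CL where "CL = min 1 ((au - al)\<^sup>2 / 5) / 8"
  have CL: "0 < CL" unfolding CL_def using assms by simp
  show ?thesis
  proof (intro exI[of _ CL] conjI CL allI impI)
    fix n p s :: nat and T \<delta> :: real and D At :: "nat \<Rightarrow> nat \<Rightarrow> real" and fhat :: "(nat \<Rightarrow> nat) \<Rightarrow> nat \<Rightarrow> real"
    assume h: "1 \<le> n" "10 \<le> p" "1 \<le> s" "real s < real p / 3 - 1" "0 < T"
      "orthonormal_mat p D" "first_col_const p D"
      "\<forall>i<n. \<forall>j<p. al / sqrt (real n) \<le> At i j \<and> At i j \<le> au / sqrt (real n)"
      "0 \<le> \<delta>" "\<delta> < 1"
      "\<forall>u::nat \<Rightarrow> real. (\<forall>j. p \<le> j \<longrightarrow> u j = 0) \<longrightarrow> card {j. j < p \<and> u j \<noteq> 0} \<le> 2 * s \<longrightarrow>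
        (\<Sum>i<n. (matvec p At (matvec p D u) i)\<^sup>2) \<le> (1 + \<delta>) * (\<Sum>j<p. (u j)\<^sup>2)"
    define F where "F k = min (real k / ((real p)\<^sup>2 * (lambda_loc p (p - 1) (Dbar D) k)\<^sup>2))
             (real k / ((1 + \<delta>) * T) * ln ((real p - real k - 1) / (real k / 2)))" for k
    have "Max (F ` {1..s}) \<in> F ` {1..s}" using h(3) by (intro Max_in) auto
    then obtain k0 where k0: "k0 \<in> {1..s}" and Mx: "Max (F ` {1..s}) = F k0" by auto
    interpret L: LB al au n p s k0 T \<delta> D At
      by unfold_locales (use assms h k0 in auto)
    have "ennreal (CL * F k0) \<le> (SUP f\<in>FTsD p s D. risk n p T (sensA al au n At) fhat f)"
      using L.final_k[of fhat] unfolding CL_def F_def L.G_def L.Am_def L.lam_def by simp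
    then show "ennreal (CL * Max ((\<lambda>k. min
             (real k / ((real p)\<^sup>2 * (lambda_loc p (p - 1) (Dbar D) k)\<^sup>2))
             (real k / ((1 + \<delta>) * T) * ln ((real p - real k - 1) / (real k / 2)))) ` {1..s}))
        \<le> (SUP f\<in>FTsD p s D. risk n p T (sensA al au n At) fhat f)"
      using Mx unfolding F_def by simp
  qed
qed


end
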